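(* Fix $n$, generators $x_{i_1},\dots,x_{i_k}\in\mathcal{B}_n$, an index $j$, integers $a_h$ ($h\ne j$), and set $V(e)=V_n(x_{i_1}^{a_1}\cdots x_{i_j}^{e}\cdots x_{i_k}^{a_k})$ for $e\in\mathbb{Z}$. Suppose $\deg V(e+1)\le\deg V(e)$ for some $e$. Then for all $m\ge1$, $\deg V(e+m+1)>1+\deg V(e+m)$, and for all $m\ge2$, $\deg V(e+m)=\deg V(e)+3m-2$ and $V(e+m)$ has the same leading coefficient as $V(e)$.
   Context: $\mathcal{B}_n$ is the Artin braid group with generators $x_1,\dots,x_{n-1}$; $V_n(\beta)$ is the Jones polynomial of the closure of $\beta$, normalized by $V(\text{unknot})=1$, $q^{-1}V_{L_+}-qV_{L_-}=(q^{1/2}-q^{-1/2})V_{L_0}$, as a Laurent polynomial in $s=q^{-1/2}$. Conventions: closures of $\alpha x_i^{e+2}\gamma$, $\alpha x_i^{e+1}\gamma$, $\alpha x_i^{e}\gamma$ play the roles of $L_-,L_0,L_+$ (e.g. the closure of $x_1^2\in\mathcal B_2$ has Jones polynomial $-s-s^5$). For a nonzero Laurent polynomial, $\deg$ is its highest exponent and the leading coefficient is the coefficient of that term. *)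

theory Defs
  imports Main
begin

text \<open>Braid words: a letter (i, 1) stands for the Artin generator x_i and (i, -1) for its inverse.
  A Laurent polynomial in one variable is represented by its (finitely supported)
  integer coefficient function int \<Rightarrow> int.\<close>

type_synonym bword = "(nat \<times> int) list"
type_synonym laurent = "int \<Rightarrow> int"

definition gen_power :: "nat \<Rightarrow> int \<Rightarrow> bword" where
  "gen_power i a = replicate (nat \<bar>a\<bar>) (i, sgn a)"

definition monomial_word :: "nat list \<Rightarrow> int list \<Rightarrow> bword" where
  "monomial_word is as = concat (map (\<lambda>(i, a). gen_power i a) (zip is as))"

text \<open>Kauffman states of the closed braid diagram: a boolean per crossing,
  True = smoothing giving the identity (vertical) tangle, False = cup-cap (e_i) tangle.
  Nodes (t,p): strand position p (1..n) at level t (0..L); level L is glued to level 0.\<close>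

definition diag_nodes :: "nat \<Rightarrow> bword \<Rightarrow> (nat \<times> nat) set" where
  "diag_nodes n w = {(t, p). t \<le> length w \<and> 1 \<le> p \<and> p \<le> n}"

definition diag_edges :: "nat \<Rightarrow> bword \<Rightarrow> bool list \<Rightarrow> ((nat \<times> nat) \<times> (nat \<times> nat)) set" where
  "diag_edges n w st =
     {((length w, p), (0, p)) | p. 1 \<le> p \<and> p \<le> n}
   \<union> {((t, p), (Suc t, p)) | t p. t < length w \<and> 1 \<le> p \<and> p \<le> n \<and>
          (p \<noteq> fst (w ! t) \<and> p \<noteq> Suc (fst (w ! t)) \<or> st ! t)}
   \<union> {((t, fst (w ! t)), (t, Suc (fst (w ! t)))) | t. t < length w \<and> \<not> st ! t}
   \<union> {((Suc t, fst (w ! t)), (Suc t, Suc (fst (w ! t)))) | t. t < length w \<and> \<not> st ! t}"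

definition loops :: "nat \<Rightarrow> bword \<Rightarrow> bool list \<Rightarrow> nat" where
  "loops n w st = card (diag_nodes n w // ((diag_edges n w st \<union> (diag_edges n w st)\<inverse>)\<^sup>*))"

text \<open>Exponent of A contributed by a state: x_i is a negative crossing (paper's convention),
  with bracket  <x_i> = A^{-1} id + A e_i,  <x_i^{-1}> = A id + A^{-1} e_i.\<close>
definition state_exp :: "bword \<Rightarrow> bool list \<Rightarrow> int" where
  "state_exp w st = (\<Sum>t<length w. if st ! t then - snd (w ! t) else snd (w ! t))"

text \<open>Kauffman bracket <D> = sum_S A^{a(S)} d^{loops(S)-1}, d = -A^2 - A^{-2};
  coefficient of A^m.\<close>
definition bracket_coeff :: "nat \<Rightarrow> bword \<Rightarrow> laurent" where
  "bracket_coeff n w m =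
     (\<Sum>st\<in>{st. length st = length w}.
        let k = loops n w st - 1 in
        (\<Sum>j\<le>k. if state_exp w st + 4 * int j - 2 * int k = m
                  then (-1) ^ k * int (k choose j) else 0))"

text \<open>f = (-A^3)^{-writhe} <D>, writhe = - (exponent sum); coefficient of A^m.\<close>
definition fpoly_coeff :: "nat \<Rightarrow> bword \<Rightarrow> laurent" where
  "fpoly_coeff n w m =
     (let E = (\<Sum>t<length w. snd (w ! t)) in
      (-1) ^ nat \<bar>E\<bar> * bracket_coeff n w (m - 3 * E))"

text \<open>Jones polynomial V_n in the variable s = q^{-1/2} = A^2: coefficient of s^k.\<close>
definition jones :: "nat \<Rightarrow> bword \<Rightarrow> laurent" where
  "jones n w k = fpoly_coeff n w (2 * k)"

definition ldeg :: "laurent \<Rightarrow> int" where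
  "ldeg c = Max {k. c k \<noteq> 0}"

definition lcoeff :: "laurent \<Rightarrow> int" where
  "lcoeff c = c (ldeg c)"

end

theory Submission
  imports Defs "HOL-Computational_Algebra.Formal_Laurent_Series"
begin

unbundle fps_syntax

lemma sym_rtr: "(x,y) \<in> (E \<union> E\<inverse>)\<^sup>* \<Longrightarrow> (y,x) \<in> (E \<union> E\<inverse>)\<^sup>*"
  by (metis converse_Un converse_converse converse_rtrancl_into_rtrancl rtrancl_converseI sup_commute)
  
lemma quot_card_map:
  fixes f :: "'a \<Rightarrow> 'b"
  assumes surj: "f ` N1 = N2"
    and fin: "finite N1"
    and emap: "\<And>x y. (x,y) \<in> E1 \<Longrightarrow> (f x, f y) \<in> (E2 \<union> E2\<inverse>)\<^sup>*"
    and fib: "\<And>x y. x \<in> N1 \<Longrightarrow> y \<in> N1 \<Longrightarrow> f x = f y \<Longrightarrow> (x,y) \<in> (E1 \<union> E1\<inverse>)\<^sup>*"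
    and lift: "\<And>u v. (u,v) \<in> E2 \<Longrightarrow> \<exists>x y. x\<in>N1 \<and> y\<in>N1 \<and> f x = u \<and> f y = v \<and> (x,y) \<in> (E1 \<union> E1\<inverse>)\<^sup>*"
  shows "card (N1 // (E1 \<union> E1\<inverse>)\<^sup>*) = card (N2 // (E2 \<union> E2\<inverse>)\<^sup>*)"
proof -
  define R1 where "R1 = (E1 \<union> E1\<inverse>)\<^sup>*"
  define R2 where "R2 = (E2 \<union> E2\<inverse>)\<^sup>*"
  have fwd: "(f x, f y) \<in> R2" if "(x,y) \<in> R1" for x y
    using that unfolding R1_def R2_def
  proof (induction rule: rtrancl_induct)
    case base then show ?case by simp
  next
    case (step y z)
    have "(y,z) \<in> E1 \<or> (z,y) \<in> E1" using step(2) by auto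
    then have "(f y, f z) \<in> (E2 \<union> E2\<inverse>)\<^sup>*"
    proof
      assume "(y,z) \<in> E1" then show ?thesis by (rule emap)
    next
      assume "(z,y) \<in> E1" then show ?thesis by (rule sym_rtr[OF emap])
    qed
    with step show ?case by (meson rtrancl_trans)
  qed
  have bwd0: "\<And>x''. x'' \<in> N1 \<Longrightarrow> f x'' = z \<Longrightarrow> (x,x'') \<in> R1"
    if "(f x, z) \<in> R2" "x \<in> N1" for x z
    using that(1) unfolding R2_def
  proof (induction rule: rtrancl_induct)
    case base then show ?case using fib[OF that(2)] R1_def by auto
  next
    case (step y z x'')
    have "\<exists>x1 x2. x1\<in>N1 \<and> x2\<in>N1 \<and> f x1 = y \<and> f x2 = z \<and> (x1,x2) \<in> R1"
    proof -
      have "(y,z) \<in> E2 \<or> (z,y) \<in> E2" using step(2) by auto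
      then show ?thesis
      proof
        assume "(y,z) \<in> E2" then show ?thesis using lift[of y z] unfolding R1_def by blast
      next
        assume "(z,y) \<in> E2"
        then obtain x2 x1 where h: "x2\<in>N1" "x1\<in>N1" "f x2 = z" "f x1 = y" "(x2,x1) \<in> (E1 \<union> E1\<inverse>)\<^sup>*"
          using lift[of z y] by blast
        have "(x1,x2) \<in> (E1 \<union> E1\<inverse>)\<^sup>*" using h(5) by (rule sym_rtr)
        then show ?thesis unfolding R1_def using h(1-4) by blast
      qed
    qed
    then obtain x1 x2 where x: "x1\<in>N1" "x2\<in>N1" "f x1 = y" "f x2 = z" "(x1,x2) \<in> R1" by blast
    have "(x,x1) \<in> R1" using step(3) x by blast
    moreover have "(x2,x'') \<in> R1" using fib x step unfolding R1_def by auto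
    ultimately show ?case using x(5) unfolding R1_def by (meson rtrancl_trans)
  qed
  have bwd: "(x,y) \<in> R1" if "(f x, f y) \<in> R2" "x \<in> N1" "y \<in> N1" for x y
    using bwd0 that by blast
  have symR1: "(x,y) \<in> R1 \<Longrightarrow> (y,x) \<in> R1" for x y unfolding R1_def by (rule sym_rtr)
  have symR2: "(x,y) \<in> R2 \<Longrightarrow> (y,x) \<in> R2" for x y unfolding R2_def by (rule sym_rtr)
  have eqR1: "R1``{x} = R1``{y} \<longleftrightarrow> (x,y) \<in> R1" for x y
  proof
    assume "R1``{x} = R1``{y}"
    then have "y \<in> R1``{x}" unfolding R1_def by auto
    then show "(x,y) \<in> R1" by auto
  next
    assume "(x,y) \<in> R1"
    then show "R1``{x} = R1``{y}"
    proof (intro set_eqI iffI)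
      fix z assume a: "(x,y) \<in> R1" and "z \<in> R1``{x}"
      then have "(x,z) \<in> R1" by simp
      then have "(y,z) \<in> R1" using symR1[OF a] unfolding R1_def by (rule rtrancl_trans[rotated])
      then show "z \<in> R1``{y}" by simp
    next
      fix z assume a: "(x,y) \<in> R1" and "z \<in> R1``{y}"
      then have "(y,z) \<in> R1" by simp
      then have "(x,z) \<in> R1" using a unfolding R1_def by (rule rtrancl_trans[rotated])
      then show "z \<in> R1``{x}" by simp
    qed
  qed
  have eqR2: "R2``{x} = R2``{y} \<longleftrightarrow> (x,y) \<in> R2" for x y
  proof
    assume "R2``{x} = R2``{y}"
    then have "y \<in> R2``{x}" unfolding R2_def by auto
    then show "(x,y) \<in> R2" by auto
  next
    assume "(x,y) \<in> R2"
    then show "R2``{x} = R2``{y}"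
    proof (intro set_eqI iffI)
      fix z assume a: "(x,y) \<in> R2" and "z \<in> R2``{x}"
      then have "(x,z) \<in> R2" by simp
      then have "(y,z) \<in> R2" using symR2[OF a] unfolding R2_def by (rule rtrancl_trans[rotated])
      then show "z \<in> R2``{y}" by simp
    next
      fix z assume a: "(x,y) \<in> R2" and "z \<in> R2``{y}"
      then have "(y,z) \<in> R2" by simp
      then have "(x,z) \<in> R2" using a unfolding R2_def by (rule rtrancl_trans[rotated])
      then show "z \<in> R2``{x}" by simp
    qed
  qed
  define g where "g = (\<lambda>x. R1``{x})"
  define h where "h = (\<lambda>x. R2``{f x})"
  have q1: "N1 // R1 = g ` N1" unfolding quotient_def g_def by auto
  have q2: "N2 // R2 = h ` N1" unfolding quotient_def h_def surj[symmetric] by auto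
  have gh: "g x = g y \<longleftrightarrow> h x = h y" if "x \<in> N1" "y \<in> N1" for x y
    unfolding g_def h_def eqR1 eqR2 using fwd[of x y] bwd[of x y] that by blast
  have "card (g ` N1) = card (h ` N1)"
  proof -
    have "bij_betw (\<lambda>C. h (SOME x. x \<in> N1 \<and> g x = C)) (g ` N1) (h ` N1)"
    proof (rule bij_betw_imageI)
      show "inj_on (\<lambda>C. h (SOME x. x \<in> N1 \<and> g x = C)) (g ` N1)"
      proof (rule inj_onI)
        fix C D assume CD: "C \<in> g ` N1" "D \<in> g ` N1"
          "h (SOME x. x \<in> N1 \<and> g x = C) = h (SOME x. x \<in> N1 \<and> g x = D)"
        obtain c where c: "c \<in> N1" "g c = C" using CD by auto
        obtain d where d: "d \<in> N1" "g d = D" using CD by auto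
        have s1: "(SOME x. x \<in> N1 \<and> g x = C) \<in> N1 \<and> g (SOME x. x \<in> N1 \<and> g x = C) = C"
          by (rule someI[of _ c]) (use c in auto)
        have s2: "(SOME x. x \<in> N1 \<and> g x = D) \<in> N1 \<and> g (SOME x. x \<in> N1 \<and> g x = D) = D"
          by (rule someI[of _ d]) (use d in auto)
        let ?a = "SOME x. x \<in> N1 \<and> g x = C" and ?b = "SOME x. x \<in> N1 \<and> g x = D"
        have "g ?a = g ?b" using gh[of ?a ?b] s1 s2 CD(3) by simp
        then show "C = D" using s1 s2 by simp
      qed
      show "(\<lambda>C. h (SOME x. x \<in> N1 \<and> g x = C)) ` g ` N1 = h ` N1"
      proof
        show "(\<lambda>C. h (SOME x. x \<in> N1 \<and> g x = C)) ` g ` N1 \<subseteq> h ` N1"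
        proof
          fix y assume "y \<in> (\<lambda>C. h (SOME x. x \<in> N1 \<and> g x = C)) ` g ` N1"
          then obtain c where c: "c \<in> N1" "y = h (SOME x. x \<in> N1 \<and> g x = g c)" by auto
          have s1: "(SOME x. x \<in> N1 \<and> g x = g c) \<in> N1 \<and> g (SOME x. x \<in> N1 \<and> g x = g c) = g c"
            by (rule someI[of _ c]) (use c in auto)
          show "y \<in> h ` N1" using s1 c by auto
        qed
      next
        show "h ` N1 \<subseteq> (\<lambda>C. h (SOME x. x \<in> N1 \<and> g x = C)) ` g ` N1"
        proof
          fix y assume "y \<in> h ` N1"
          then obtain c where c: "c \<in> N1" "y = h c" by auto
          have s1: "(SOME x. x \<in> N1 \<and> g x = g c) \<in> N1 \<and> g (SOME x. x \<in> N1 \<and> g x = g c) = g c"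
            by (rule someI[of _ c]) (use c in auto)
          then have "h (SOME x. x \<in> N1 \<and> g x = g c) = y" using gh c by blast
          then show "y \<in> (\<lambda>C. h (SOME x. x \<in> N1 \<and> g x = C)) ` g ` N1" using c by blast
        qed
      qed
    qed
    then show ?thesis by (rule bij_betw_same_card)
  qed
  then show ?thesis using q1 q2 R1_def R2_def by simp
qed

definition ins :: "nat \<Rightarrow> 'a \<Rightarrow> 'a list \<Rightarrow> 'a list" where
  "ins p x xs = take p xs @ x # drop p xs"

lemma length_ins[simp]: "length (ins p x xs) = Suc (length xs)"
  by (simp add: ins_def)

lemma ins_nth: "p \<le> length xs \<Longrightarrow>
   ins p x xs ! t = (if t < p then xs!t else if t = p then x else xs!(t-1))"
  by (auto simp: ins_def nth_append min_def)

definition valid :: "nat \<Rightarrow> bword \<Rightarrow> bool" where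
  "valid n w \<longleftrightarrow> (\<forall>x\<in>set w. 1 \<le> fst x \<and> fst x < n)"

lemma valid_nth: "valid n w \<Longrightarrow> t < length w \<Longrightarrow> 1 \<le> fst (w!t) \<and> fst (w!t) < n"
  by (auto simp: valid_def)

lemma edge_iff: "(x,y) \<in> diag_edges n w st \<longleftrightarrow>
   (\<exists>q. 1\<le>q \<and> q\<le>n \<and> x = (length w,q) \<and> y = (0,q)) \<or>
   (\<exists>t q. t<length w \<and> 1\<le>q \<and> q\<le>n \<and> (q \<noteq> fst (w ! t) \<and> q \<noteq> Suc (fst (w ! t)) \<or> st ! t)
       \<and> x=(t,q) \<and> y = (Suc t,q)) \<or>
   (\<exists>t. t<length w \<and> \<not> st!t \<and> x = (t,fst(w!t)) \<and> y = (t,Suc(fst(w!t)))) \<or>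
   (\<exists>t. t<length w \<and> \<not> st!t \<and> x = (Suc t,fst(w!t)) \<and> y = (Suc t,Suc(fst(w!t))))"
proof -
  have e1: "(x,y) \<in> {((length w, p), (0, p)) | p. 1 \<le> p \<and> p \<le> n} \<longleftrightarrow>
     (\<exists>q. 1\<le>q \<and> q\<le>n \<and> x = (length w,q) \<and> y = (0,q))" by auto
  have e2: "(x,y) \<in> {((t, p), (Suc t, p)) | t p. t < length w \<and> 1 \<le> p \<and> p \<le> n \<and>
          (p \<noteq> fst (w ! t) \<and> p \<noteq> Suc (fst (w ! t)) \<or> st ! t)} \<longleftrightarrow>
     (\<exists>t q. t<length w \<and> 1\<le>q \<and> q\<le>n \<and> (q \<noteq> fst (w ! t) \<and> q \<noteq> Suc (fst (w ! t)) \<or> st ! t)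
       \<and> x=(t,q) \<and> y = (Suc t,q))" by auto
  have e3: "(x,y) \<in> {((t, fst (w ! t)), (t, Suc (fst (w ! t)))) | t. t < length w \<and> \<not> st ! t} \<longleftrightarrow>
     (\<exists>t. t<length w \<and> \<not> st!t \<and> x = (t,fst(w!t)) \<and> y = (t,Suc(fst(w!t))))" by auto
  have e4: "(x,y) \<in> {((Suc t, fst (w ! t)), (Suc t, Suc (fst (w ! t)))) | t. t < length w \<and> \<not> st ! t} \<longleftrightarrow>
     (\<exists>t. t<length w \<and> \<not> st!t \<and> x = (Suc t,fst(w!t)) \<and> y = (Suc t,Suc(fst(w!t))))" by auto
  show ?thesis unfolding diag_edges_def Un_iff e1 e2 e3 e4 by (simp only: disj_assoc)
qed

lemma edge_in_R: "(x,y) \<in> E \<Longrightarrow> (x,y) \<in> (E \<union> E\<inverse>)\<^sup>*" by auto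

lemma loops_L1:
  assumes p: "p \<le> length w" and len: "length st = length w" and v: "valid n w"
  shows "loops n (ins p l w) (ins p True st) = loops n w st"
proof -
  define L where "L = length w"
  define w1 where "w1 = ins p l w"
  define st1 where "st1 = ins p True st"
  define f where "f = (\<lambda>(t::nat,q::nat). (if t \<le> p then t else t - 1, q))"
  have lw1: "length w1 = Suc L" unfolding w1_def L_def by simp
  have w1n: "w1 ! t = (if t < p then w!t else if t = p then l else w!(t-1))" for t
    unfolding w1_def using ins_nth[OF p] by simp
  have st1n: "st1 ! t = (if t < p then st!t else if t = p then True else st!(t-1))" for t
    unfolding st1_def using ins_nth[of p st] p len by simp
  have pL: "p \<le> L" using p L_def by simp
  show ?thesis
    unfolding loops_def w1_def[symmetric] st1_def[symmetric]
  proof (rule quot_card_map[where f=f])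
    show "f ` diag_nodes n w1 = diag_nodes n w"
    proof
      show "f ` diag_nodes n w1 \<subseteq> diag_nodes n w"
        using lw1 pL by (auto simp: f_def diag_nodes_def L_def)
      show "diag_nodes n w \<subseteq> f ` diag_nodes n w1"
      proof
        fix x assume "x \<in> diag_nodes n w"
        then obtain t q where x: "x = (t,q)" "t \<le> L" "1 \<le> q" "q \<le> n"
          by (auto simp: diag_nodes_def L_def)
        show "x \<in> f ` diag_nodes n w1"
        proof (cases "t \<le> p")
          case True
          then show ?thesis using x lw1
            by (auto simp: f_def diag_nodes_def intro!: image_eqI[where x="(t,q)"])
        next
          case False
          then show ?thesis using x lw1
            by (auto simp: f_def diag_nodes_def intro!: image_eqI[where x="(Suc t,q)"])
        qed
      qed
    qed
    show "finite (diag_nodes n w1)"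
    proof -
      have "diag_nodes n w1 \<subseteq> {0..length w1} \<times> {0..n}" by (auto simp: diag_nodes_def)
      then show ?thesis by (rule finite_subset) auto
    qed
    show "(f x, f y) \<in> (diag_edges n w st \<union> (diag_edges n w st)\<inverse>)\<^sup>*"
      if "(x,y) \<in> diag_edges n w1 st1" for x y
    proof -
      let ?R = "(diag_edges n w st \<union> (diag_edges n w st)\<inverse>)\<^sup>*"
      from that[unfolded edge_iff lw1]
      consider (a) q where "1\<le>q" "q\<le>n" "x = (Suc L,q)" "y = (0,q)"
        | (b) t q where "t<Suc L" "1\<le>q" "q\<le>n"
             "(q \<noteq> fst (w1 ! t) \<and> q \<noteq> Suc (fst (w1 ! t)) \<or> st1 ! t)" "x=(t,q)" "y = (Suc t,q)"
        | (c) t where "t < Suc L" "\<not> st1!t" "x = (t,fst(w1!t))" "y = (t,Suc(fst(w1!t)))"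
        | (d) t where "t < Suc L" "\<not> st1!t" "x = (Suc t,fst(w1!t))" "y = (Suc t,Suc(fst(w1!t)))"
        by blast
      then show ?thesis
      proof cases
        case a
        then have "(f x, f y) \<in> diag_edges n w st" using pL
          by (auto simp: f_def edge_iff L_def)
        then show ?thesis by auto
      next
        case b
        show ?thesis
        proof (cases "t = p")
          case True then show ?thesis using b by (simp add: f_def)
        next
          case False
          have "(f x, f y) \<in> diag_edges n w st"
          proof (cases "t < p")
            case True then show ?thesis using b pL
              by (simp add: f_def edge_iff L_def[symmetric] w1n st1n)
          next
            case False
            then have tt: "t = Suc (t-1)" "t - 1 < L" using \<open>t \<noteq> p\<close> b by auto
            show ?thesis using b pL False \<open>t \<noteq> p\<close>
              apply (simp add: f_def edge_iff L_def[symmetric] w1n st1n)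
              using tt by auto
          qed
          then show ?thesis by auto
        qed
      next
        case c
        then have tp: "t \<noteq> p" using st1n by auto
        have "(f x, f y) \<in> diag_edges n w st"
        proof (cases "t < p")
          case True then show ?thesis using c pL
            by (simp add: f_def edge_iff L_def[symmetric] w1n st1n)
        next
          case False
          then have tt: "t = Suc (t-1)" "t - 1 < L" using tp c by auto
          show ?thesis using c pL tp False
            apply (simp add: f_def edge_iff L_def[symmetric] w1n st1n)
            using tt by auto
        qed
        then show ?thesis by auto
      next
        case d
        then have tp: "t \<noteq> p" using st1n by auto
        have "(f x, f y) \<in> diag_edges n w st"
        proof (cases "t < p")
          case True then show ?thesis using d pL
            by (simp add: f_def edge_iff L_def[symmetric] w1n st1n)
        next
          case False
          then have tt: "t = Suc (t-1)" "t - 1 < L" using tp d by auto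
          show ?thesis using d pL tp False
            apply (simp add: f_def edge_iff L_def[symmetric] w1n st1n)
            using tt by auto
        qed
        then show ?thesis by auto
      qed
    qed
    show "(x,y) \<in> (diag_edges n w1 st1 \<union> (diag_edges n w1 st1)\<inverse>)\<^sup>*"
      if "x \<in> diag_nodes n w1" "y \<in> diag_nodes n w1" "f x = f y" for x y
    proof -
      obtain t q t' q' where xy: "x = (t,q)" "y = (t',q')" by force
      have qq: "q' = q" "1 \<le> q" "q \<le> n" using that xy by (auto simp: f_def diag_nodes_def)
      have tt: "t \<le> Suc L" "t' \<le> Suc L" using that xy lw1 by (auto simp: diag_nodes_def)
      have e: "((p,q),(Suc p,q)) \<in> diag_edges n w1 st1"
        using pL qq by (auto simp: edge_iff lw1 st1n)
      have ff: "(if t \<le> p then t else t-1) = (if t' \<le> p then t' else t'-1)"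
        using that(3) xy by (simp add: f_def)
      have "t = t' \<or> (t = p \<and> t' = Suc p) \<or> (t' = p \<and> t = Suc p)"
        using ff by (simp split: if_splits; arith)
      then consider "t = t'" | "t = p \<and> t' = Suc p" | "t' = p \<and> t = Suc p" by blast
      then show ?thesis
        by cases (use xy qq e in \<open>auto intro: converse_rtrancl_into_rtrancl\<close>)
    qed
    show "\<exists>x y. x \<in> diag_nodes n w1 \<and> y \<in> diag_nodes n w1 \<and> f x = u \<and> f y = v \<and>
                (x, y) \<in> (diag_edges n w1 st1 \<union> (diag_edges n w1 st1)\<inverse>)\<^sup>*"
      if "(u,v) \<in> diag_edges n w st" for u v
    proof -
      from that[unfolded edge_iff L_def[symmetric]]
      consider (a) q where "1\<le>q" "q\<le>n" "u = (L,q)" "v = (0,q)"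
        | (b) t q where "t<L" "1\<le>q" "q\<le>n"
             "(q \<noteq> fst (w ! t) \<and> q \<noteq> Suc (fst (w ! t)) \<or> st ! t)" "u=(t,q)" "v = (Suc t,q)"
        | (c) t where "t < L" "\<not> st!t" "u = (t,fst(w!t))" "v = (t,Suc(fst(w!t)))"
        | (d) t where "t < L" "\<not> st!t" "u = (Suc t,fst(w!t))" "v = (Suc t,Suc(fst(w!t)))"
        by blast
      then show ?thesis
      proof cases
        case a
        have "((Suc L,q),(0,q)) \<in> diag_edges n w1 st1" using a by (auto simp: edge_iff lw1)
        then show ?thesis using a pL lw1
          by (intro exI[where x="(Suc L,q)"] exI[where x="(0,q)"]) (auto simp: f_def diag_nodes_def)
      next
        case b
        show ?thesis
        proof (cases "t < p")
          case True
          have "((t,q),(Suc t,q)) \<in> diag_edges n w1 st1" using b True pL by (auto simp: edge_iff lw1 w1n st1n)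
          then show ?thesis using b True pL lw1
            by (intro exI[where x="(t,q)"] exI[where x="(Suc t,q)"]) (auto simp: f_def diag_nodes_def)
        next
          case False
          have "((Suc t,q),(Suc (Suc t),q)) \<in> diag_edges n w1 st1" using b False pL by (auto simp: edge_iff lw1 w1n st1n)
          then show ?thesis using b False pL lw1
            by (intro exI[where x="(Suc t,q)"] exI[where x="(Suc (Suc t),q)"]) (auto simp: f_def diag_nodes_def)
        qed
      next
        case c
        have vt: "1 \<le> fst (w!t)" "fst (w!t) < n" using valid_nth[OF v, of t] c L_def by auto
        show ?thesis
        proof (cases "t < p")
          case True
          have "((t,fst(w!t)),(t,Suc(fst(w!t)))) \<in> diag_edges n w1 st1" using c True pL
            by (auto simp: edge_iff lw1 w1n st1n)
          then show ?thesis using c True pL lw1 vt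
            by (intro exI[where x="(t,fst(w!t))"] exI[where x="(t,Suc(fst(w!t)))"]) (auto simp: f_def diag_nodes_def)
        next
          case False
          have "((Suc t,fst(w!t)),(Suc t,Suc(fst(w!t)))) \<in> diag_edges n w1 st1" using c False pL
            by (auto simp: edge_iff lw1 w1n st1n intro!: disjI2 exI[where x="Suc t"])
          then show ?thesis using c False pL lw1 vt
            by (intro exI[where x="(Suc t,fst(w!t))"] exI[where x="(Suc t,Suc(fst(w!t)))"]) (auto simp: f_def diag_nodes_def)
        qed
      next
        case d
        have vt: "1 \<le> fst (w!t)" "fst (w!t) < n" using valid_nth[OF v, of t] d L_def by auto
        show ?thesis
        proof (cases "t < p")
          case True
          have "((Suc t,fst(w!t)),(Suc t,Suc(fst(w!t)))) \<in> diag_edges n w1 st1" using d True pL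
            by (auto simp: edge_iff lw1 w1n st1n)
          then show ?thesis using d True pL lw1 vt
            by (intro exI[where x="(Suc t,fst(w!t))"] exI[where x="(Suc t,Suc(fst(w!t)))"]) (auto simp: f_def diag_nodes_def)
        next
          case False
          have "((Suc (Suc t),fst(w!t)),(Suc (Suc t),Suc(fst(w!t)))) \<in> diag_edges n w1 st1" using d False pL
            by (auto simp: edge_iff lw1 w1n st1n intro!: disjI2 exI[where x="Suc t"])
          then show ?thesis using d False pL lw1 vt
            by (intro exI[where x="(Suc (Suc t),fst(w!t))"] exI[where x="(Suc (Suc t),Suc(fst(w!t)))"]) (auto simp: f_def diag_nodes_def)
        qed
      qed
    qed
  qed
qed

lemma quot_insert_isolated:
  assumes "z \<notin> N" "finite N" "\<And>x y. (x,y) \<in> E \<Longrightarrow> x \<noteq> z \<and> y \<noteq> z"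
  shows "card (insert z N // (E \<union> E\<inverse>)\<^sup>*) = Suc (card (N // (E \<union> E\<inverse>)\<^sup>*))"
proof -
  let ?R = "(E \<union> E\<inverse>)\<^sup>*"
  have z1: "(z,y) \<in> ?R \<Longrightarrow> y = z" for y
    by (induction rule: rtrancl_induct) (use assms(3) in auto)
  have zc: "?R``{z} = {z}" using z1 by auto
  have q: "insert z N // ?R = insert {z} (N // ?R)"
    unfolding quotient_def using zc by auto
  have nz: "{z} \<notin> N // ?R"
  proof
    assume "{z} \<in> N // ?R"
    then obtain x where "x \<in> N" "{z} = ?R``{x}" unfolding quotient_def by auto
    then have "x \<in> {z}" by auto
    then show False using \<open>x\<in>N\<close> assms(1) by auto
  qed
  have fin: "finite (N // ?R)" unfolding quotient_def using assms(2) by auto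
  show ?thesis unfolding q using nz fin by simp
qed

lemma loops_L2:
  assumes p: "p < length w" and len: "length st = length w" and v: "valid n w"
    and fl: "fst l = fst (w!p)" and nst: "\<not> st!p"
  shows "loops n (ins p l w) (ins p False st) = Suc (loops n w st)"
proof -
  define L where "L = length w"
  define i where "i = fst (w!p)"
  define w1 where "w1 = ins p l w"
  define st1 where "st1 = ins p False st"
  define f where "f = (\<lambda>(t::nat,q::nat). if t \<le> p then (t,q) else if t = Suc p then
                         (if q = i \<or> q = Suc i then (0,0) else (p,q)) else (t - 1, q))"
  have lw1: "length w1 = Suc L" unfolding w1_def L_def by simp
  have pL: "p < L" using p L_def by simp
  have w1n: "w1 ! t = (if t < p then w!t else if t = p then l else w!(t-1))" for t
    unfolding w1_def using ins_nth[of p w] p by simp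
  have st1n: "st1 ! t = (if t < p then st!t else if t = p then False else st!(t-1))" for t
    unfolding st1_def using ins_nth[of p st] p len by simp
  have vi: "1 \<le> i" "i < n" using valid_nth[OF v p] i_def by auto
  have li: "fst l = i" using fl i_def by simp
  have w1p: "fst (w1!p) = i" "fst (w1 ! Suc p) = i" "\<not> st1!p" "\<not> st1 ! Suc p"
    using w1n st1n li i_def nst by auto
  define E2 where "E2 = diag_edges n w st"
  have step1: "card (diag_nodes n w1 // (diag_edges n w1 st1 \<union> (diag_edges n w1 st1)\<inverse>)\<^sup>*)
      = card (insert (0,0) (diag_nodes n w) // (E2 \<union> E2\<inverse>)\<^sup>*)"
  proof (rule quot_card_map[where f=f])
    show "f ` diag_nodes n w1 = insert (0,0) (diag_nodes n w)"
    proof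
      show "f ` diag_nodes n w1 \<subseteq> insert (0,0) (diag_nodes n w)"
        using lw1 pL by (auto simp: f_def diag_nodes_def L_def split: if_splits)
      show "insert (0,0) (diag_nodes n w) \<subseteq> f ` diag_nodes n w1"
      proof
        fix x assume "x \<in> insert (0,0) (diag_nodes n w)"
        then consider "x = (0,0)" | t q where "x = (t,q)" "t \<le> L" "1 \<le> q" "q \<le> n"
          by (auto simp: diag_nodes_def L_def)
        then show "x \<in> f ` diag_nodes n w1"
        proof cases
          case 1 then show ?thesis using vi lw1 pL
            by (auto simp: f_def diag_nodes_def intro!: image_eqI[where x="(Suc p,i)"])
        next
          case 2
          show ?thesis
          proof (cases "t \<le> p")
            case True
            then show ?thesis using 2 lw1
              by (auto simp: f_def diag_nodes_def intro!: image_eqI[where x="(t,q)"])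
          next
            case False
            then show ?thesis using 2 lw1
              by (auto simp: f_def diag_nodes_def intro!: image_eqI[where x="(Suc t,q)"])
          qed
        qed
      qed
    qed
    show "finite (diag_nodes n w1)"
    proof -
      have "diag_nodes n w1 \<subseteq> {0..length w1} \<times> {0..n}" by (auto simp: diag_nodes_def)
      then show ?thesis by (rule finite_subset) auto
    qed
    show "(f x, f y) \<in> (E2 \<union> E2\<inverse>)\<^sup>*"
      if "(x,y) \<in> diag_edges n w1 st1" for x y
    proof -
      from that[unfolded edge_iff lw1]
      consider (a) q where "1\<le>q" "q\<le>n" "x = (Suc L,q)" "y = (0,q)"
        | (b) t q where "t<Suc L" "1\<le>q" "q\<le>n"
             "(q \<noteq> fst (w1 ! t) \<and> q \<noteq> Suc (fst (w1 ! t)) \<or> st1 ! t)" "x=(t,q)" "y = (Suc t,q)"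
        | (c) t where "t < Suc L" "\<not> st1!t" "x = (t,fst(w1!t))" "y = (t,Suc(fst(w1!t)))"
        | (d) t where "t < Suc L" "\<not> st1!t" "x = (Suc t,fst(w1!t))" "y = (Suc t,Suc(fst(w1!t)))"
        by blast
      then show ?thesis
      proof cases
        case a
        then have "(f x, f y) \<in> E2" using pL
          by (auto simp: f_def edge_iff L_def E2_def)
        then show ?thesis by auto
      next
        case b
        consider "t < p" | "t = p" | "t = Suc p" | "t > Suc p" by linarith
        then show ?thesis
        proof cases
          case 1
          then have "(f x, f y) \<in> E2" using b pL
            by (simp add: f_def edge_iff L_def[symmetric] w1n st1n E2_def)
          then show ?thesis by auto
        next
          case 2
          then show ?thesis using b w1p by (simp add: f_def)
        next
          case 3
          then have "(f x, f y) \<in> E2" using b pL w1p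
            by (simp add: f_def edge_iff L_def[symmetric] E2_def i_def st1n w1n)
          then show ?thesis by auto
        next
          case 4
          then have tt: "t = Suc (t-1)" "t - 1 < L" using b by auto
          have "(f x, f y) \<in> E2" using b pL 4
            apply (simp add: f_def edge_iff L_def[symmetric] w1n st1n E2_def)
            using tt by auto
          then show ?thesis by auto
        qed
      next
        case c
        consider "t < p" | "t = p" | "t = Suc p" | "t > Suc p" by linarith
        then show ?thesis
        proof cases
          case 1
          then have "(f x, f y) \<in> E2" using c pL
            by (simp add: f_def edge_iff L_def[symmetric] w1n st1n E2_def)
          then show ?thesis by auto
        next
          case 2
          then have "(f x, f y) \<in> E2" using c pL w1p nst
            by (simp add: f_def edge_iff L_def[symmetric] E2_def i_def)
          then show ?thesis by auto
        next
          case 3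
          then show ?thesis using c w1p by (simp add: f_def)
        next
          case 4
          then have tt: "t = Suc (t-1)" "t - 1 < L" using c by auto
          have "(f x, f y) \<in> E2" using c pL 4
            apply (simp add: f_def edge_iff L_def[symmetric] w1n st1n E2_def)
            using tt by auto
          then show ?thesis by auto
        qed
      next
        case d
        consider "t < p" | "t = p" | "t = Suc p" | "t > Suc p" by linarith
        then show ?thesis
        proof cases
          case 1
          then have "(f x, f y) \<in> E2" using d pL
            by (simp add: f_def edge_iff L_def[symmetric] w1n st1n E2_def)
          then show ?thesis by auto
        next
          case 2
          then show ?thesis using d w1p by (simp add: f_def)
        next
          case 3
          then have "(f x, f y) \<in> E2" using d pL w1p nst
            by (simp add: f_def edge_iff L_def[symmetric] E2_def i_def)
          then show ?thesis by auto
        next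
          case 4
          then have tt: "t = Suc (t-1)" "t - 1 < L" using d by auto
          have "(f x, f y) \<in> E2" using d pL 4
            apply (simp add: f_def edge_iff L_def[symmetric] w1n st1n E2_def)
            using tt by auto
          then show ?thesis by auto
        qed
      qed
    qed
    show "(x,y) \<in> (diag_edges n w1 st1 \<union> (diag_edges n w1 st1)\<inverse>)\<^sup>*"
      if "x \<in> diag_nodes n w1" "y \<in> diag_nodes n w1" "f x = f y" for x y
    proof -
      obtain t q t' q' where xy: "x = (t,q)" "y = (t',q')" by force
      have qb: "1 \<le> q" "q \<le> n" "1 \<le> q'" "q' \<le> n" "t \<le> Suc L" "t' \<le> Suc L"
        using that xy lw1 by (auto simp: diag_nodes_def)
      have ff: "f (t,q) = f (t',q')" using that xy by simp
      have "(t = t' \<and> q = q') \<or> (q = q' \<and> q \<noteq> i \<and> q \<noteq> Suc i \<and> ((t = p \<and> t' = Suc p) \<or> (t' = p \<and> t = Suc p)))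
          \<or> (t = Suc p \<and> t' = Suc p \<and> (q = i \<or> q = Suc i) \<and> (q' = i \<or> q' = Suc i))"
        using ff qb by (simp add: f_def split: if_splits; arith)
      moreover have e1: "((p,q),(Suc p,q)) \<in> diag_edges n w1 st1" if "q \<noteq> i" "q \<noteq> Suc i" "1 \<le> q" "q \<le> n" for q
        using pL that w1p by (auto simp: edge_iff lw1)
      moreover have e2: "((Suc p,i),(Suc p,Suc i)) \<in> diag_edges n w1 st1"
        using pL w1p unfolding edge_iff lw1 by (metis less_SucI)
      ultimately show ?thesis using xy qb
        by (elim disjE) (auto intro: converse_rtrancl_into_rtrancl)
    qed
    show "\<exists>x y. x \<in> diag_nodes n w1 \<and> y \<in> diag_nodes n w1 \<and> f x = u \<and> f y = v \<and>
                (x, y) \<in> (diag_edges n w1 st1 \<union> (diag_edges n w1 st1)\<inverse>)\<^sup>*"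
      if "(u,v) \<in> E2" for u v
    proof -
      from that[unfolded E2_def edge_iff L_def[symmetric]]
      consider (a) q where "1\<le>q" "q\<le>n" "u = (L,q)" "v = (0,q)"
        | (b) t q where "t<L" "1\<le>q" "q\<le>n"
             "(q \<noteq> fst (w ! t) \<and> q \<noteq> Suc (fst (w ! t)) \<or> st ! t)" "u=(t,q)" "v = (Suc t,q)"
        | (c) t where "t < L" "\<not> st!t" "u = (t,fst(w!t))" "v = (t,Suc(fst(w!t)))"
        | (d) t where "t < L" "\<not> st!t" "u = (Suc t,fst(w!t))" "v = (Suc t,Suc(fst(w!t)))"
        by blast
      then show ?thesis
      proof cases
        case a
        have "((Suc L,q),(0,q)) \<in> diag_edges n w1 st1" using a by (auto simp: edge_iff lw1)
        then show ?thesis using a pL lw1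
          by (intro exI[where x="(Suc L,q)"] exI[where x="(0,q)"]) (auto simp: f_def diag_nodes_def)
      next
        case b
        consider "t < p" | "t = p" | "t > p" by linarith
        then show ?thesis
        proof cases
          case 1
          have "((t,q),(Suc t,q)) \<in> diag_edges n w1 st1" using b 1 pL by (auto simp: edge_iff lw1 w1n st1n)
          then show ?thesis using b 1 pL lw1
            by (intro exI[where x="(t,q)"] exI[where x="(Suc t,q)"]) (auto simp: f_def diag_nodes_def)
        next
          case 2
          have qi: "q \<noteq> i" "q \<noteq> Suc i" using b 2 nst i_def by auto
          have "((Suc t,q),(Suc (Suc t),q)) \<in> diag_edges n w1 st1" using b 2 pL by (auto simp: edge_iff lw1 w1n st1n)
          then show ?thesis using b 2 pL lw1 qi
            by (intro exI[where x="(Suc t,q)"] exI[where x="(Suc (Suc t),q)"]) (auto simp: f_def diag_nodes_def)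
        next
          case 3
          have "((Suc t,q),(Suc (Suc t),q)) \<in> diag_edges n w1 st1" using b 3 pL by (auto simp: edge_iff lw1 w1n st1n)
          then show ?thesis using b 3 pL lw1
            by (intro exI[where x="(Suc t,q)"] exI[where x="(Suc (Suc t),q)"]) (auto simp: f_def diag_nodes_def)
        qed
      next
        case c
        have vt: "1 \<le> fst (w!t)" "fst (w!t) < n" using valid_nth[OF v, of t] c L_def by auto
        consider "t < p" | "t = p" | "t > p" by linarith
        then show ?thesis
        proof cases
          case 1
          have "((t,fst(w!t)),(t,Suc(fst(w!t)))) \<in> diag_edges n w1 st1" using c 1 pL
            by (auto simp: edge_iff lw1 w1n st1n)
          then show ?thesis using c 1 pL lw1 vt
            by (intro exI[where x="(t,fst(w!t))"] exI[where x="(t,Suc(fst(w!t)))"]) (auto simp: f_def diag_nodes_def)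
        next
          case 2
          have "((t,fst(w!t)),(t,Suc(fst(w!t)))) \<in> diag_edges n w1 st1" using c 2 pL w1p i_def
            unfolding edge_iff lw1 by (metis less_SucI)
          then show ?thesis using c 2 pL lw1 vt
            by (intro exI[where x="(t,fst(w!t))"] exI[where x="(t,Suc(fst(w!t)))"]) (auto simp: f_def diag_nodes_def)
        next
          case 3
          have "((Suc t,fst(w!t)),(Suc t,Suc(fst(w!t)))) \<in> diag_edges n w1 st1" using c 3 pL
            by (auto simp: edge_iff lw1 w1n st1n intro!: disjI2 exI[where x="Suc t"])
          then show ?thesis using c 3 pL lw1 vt
            by (intro exI[where x="(Suc t,fst(w!t))"] exI[where x="(Suc t,Suc(fst(w!t)))"]) (auto simp: f_def diag_nodes_def)
        qed
      next
        case d
        have vt: "1 \<le> fst (w!t)" "fst (w!t) < n" using valid_nth[OF v, of t] d L_def by auto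
        consider "t < p" | "t \<ge> p" by linarith
        then show ?thesis
        proof cases
          case 1
          have "((Suc t,fst(w!t)),(Suc t,Suc(fst(w!t)))) \<in> diag_edges n w1 st1" using d 1 pL
            by (auto simp: edge_iff lw1 w1n st1n)
          then show ?thesis using d 1 pL lw1 vt
            by (intro exI[where x="(Suc t,fst(w!t))"] exI[where x="(Suc t,Suc(fst(w!t)))"]) (auto simp: f_def diag_nodes_def)
        next
          case 2
          have "((Suc (Suc t),fst(w!t)),(Suc (Suc t),Suc(fst(w!t)))) \<in> diag_edges n w1 st1" using d 2 pL
            by (auto simp: edge_iff lw1 w1n st1n intro!: disjI2 exI[where x="Suc t"])
          then show ?thesis using d 2 pL lw1 vt
            by (intro exI[where x="(Suc (Suc t),fst(w!t))"] exI[where x="(Suc (Suc t),Suc(fst(w!t)))"]) (auto simp: f_def diag_nodes_def)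
        qed
      qed
    qed
  qed
  have step2: "card (insert (0,0) (diag_nodes n w) // (E2 \<union> E2\<inverse>)\<^sup>*) = Suc (loops n w st)"
    unfolding loops_def E2_def
  proof (rule quot_insert_isolated)
    show "(0,0) \<notin> diag_nodes n w" by (auto simp: diag_nodes_def)
    have "diag_nodes n w \<subseteq> {0..length w} \<times> {0..n}" by (auto simp: diag_nodes_def)
    then show "finite (diag_nodes n w)" by (rule finite_subset) auto
    show "x \<noteq> (0,0) \<and> y \<noteq> (0,0)" if "(x,y) \<in> diag_edges n w st" for x y
    proof -
      from that[unfolded edge_iff]
      consider (a) q where "1\<le>q" "x = (length w,q)" "y = (0,q)"
        | (b) t q where "1\<le>q" "x=(t,q)" "y = (Suc t,q)"
        | (c) t where "t < length w" "x = (t,fst(w!t))" "y = (t,Suc(fst(w!t)))"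
        | (d) t where "t < length w" "x = (Suc t,fst(w!t))" "y = (Suc t,Suc(fst(w!t)))"
        by blast
      then show ?thesis
      proof cases
        case c then show ?thesis using valid_nth[OF v c(1)] by auto
      next
        case d then show ?thesis using valid_nth[OF v d(1)] by auto
      qed auto
    qed
  qed
  show ?thesis using step1 step2 unfolding loops_def w1_def st1_def by simp
qed

definition Xp :: "int \<Rightarrow> int fls" where "Xp k = fls_shift (-k) 1"

lemma Xp_nth[simp]: "Xp k $$ m = (if m = k then 1 else 0)"
  by (simp add: Xp_def)

lemma Xp_mult: "Xp a * Xp b = Xp (a+b)"
  unfolding Xp_def by (simp add: fls_times_both_shifted_simp)

lemma Xp_0[simp]: "Xp 0 = 1" by (simp add: Xp_def)

lemma Xp_times_nth[simp]: "(Xp k * f) $$ m = f $$ (m - k)"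
  unfolding Xp_def by (simp add: fls_shifted_times_simps)

lemma Xp_power: "Xp a ^ j = Xp (int j * a)"
  by (induction j) (simp_all add: Xp_mult algebra_simps)

definition dd :: "int fls" where "dd = - Xp 2 - Xp (-2)"

lemma dd_pow: "dd ^ k = fls_const ((-1)^k) * (\<Sum>j\<le>k. of_nat (k choose j) * Xp (4 * int j - 2 * int k))"
proof -
  have "dd = fls_const (-1) * (Xp 2 + Xp (-2))" unfolding dd_def
    by (simp add: algebra_simps)
  then have "dd ^ k = fls_const (-1) ^ k * (Xp 2 + Xp (-2)) ^ k" by (metis power_mult_distrib)
  also have "fls_const (-1) ^ k = fls_const ((-1::int)^k)" by (rule fls_const_power[symmetric])
  also have "(Xp 2 + Xp (-2)) ^ k = (\<Sum>j\<le>k. of_nat (k choose j) * Xp 2 ^ j * Xp (-2) ^ (k - j))"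
    by (rule binomial_ring)
  also have "\<dots> = (\<Sum>j\<le>k. of_nat (k choose j) * Xp (4 * int j - 2 * int k))"
  proof (rule sum.cong[OF refl])
    fix j assume "j \<in> {..k}"
    then have "Xp 2 ^ j * Xp (-2) ^ (k - j) = Xp (4 * int j - 2 * int k)"
      by (simp add: Xp_power Xp_mult of_nat_diff algebra_simps)
    then show "of_nat (k choose j) * Xp 2 ^ j * Xp (-2) ^ (k - j) = of_nat (k choose j) * Xp (4 * int j - 2 * int k)"
      by (simp add: mult.assoc)
  qed
  finally show ?thesis .
qed

lemma dd_pow_nth: "(dd ^ k) $$ m = (\<Sum>j\<le>k. if 4 * int j - 2 * int k = m then (-1)^k * int (k choose j) else 0)"
  unfolding dd_pow by (simp add: fls_nth_sum sum_distrib_left) (intro sum.cong; auto)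

definition brk :: "nat \<Rightarrow> bword \<Rightarrow> int fls" where
  "brk n w = (\<Sum>st\<in>{st. length st = length w}. Xp (state_exp w st) * dd ^ (loops n w st - 1))"

lemma brk_nth: "brk n w $$ m = bracket_coeff n w m"
  unfolding brk_def bracket_coeff_def Let_def fls_nth_sum Xp_times_nth dd_pow_nth
  by (intro sum.cong refl) auto

lemma take_ins: "p \<le> length xs \<Longrightarrow> take p (ins p x xs) = take p xs"
  by (simp add: ins_def)
lemma drop_ins: "p \<le> length xs \<Longrightarrow> drop (Suc p) (ins p x xs) = drop p xs"
  by (simp add: ins_def)
lemma nth_ins_p: "p \<le> length xs \<Longrightarrow> ins p x xs ! p = x"
  by (simp add: ins_def nth_append)

lemma ins_inj: "p \<le> length xs \<Longrightarrow> p \<le> length ys \<Longrightarrow> ins p a xs = ins p b ys \<Longrightarrow> a = b \<and> xs = ys"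
  by (metis append_take_drop_id drop_ins nth_ins_p take_ins)

lemma ins_ins: "p \<le> length xs \<Longrightarrow> ins p a (ins p b xs) = ins (Suc p) b (ins p a xs)"
  by (simp add: ins_def take_Suc_conv_app_nth min_def)

lemma ins_surj: "p < length ys \<Longrightarrow> ys = ins p (ys!p) (take p ys @ drop (Suc p) ys)"
  by (simp add: ins_def id_take_nth_drop[symmetric] min_def)

lemma split_states:
  assumes "p \<le> L"
  shows "(\<Sum>st\<in>{st. length st = Suc L}. g st) =
         (\<Sum>st\<in>{st::bool list. length st = L}. g (ins p True st) + g (ins p False st))"
proof -
  have img: "{st. length st = Suc L} = (\<lambda>(st,b). ins p b st) ` ({st::bool list. length st = L} \<times> UNIV)"
  proof
    show "{st. length st = Suc L} \<subseteq> (\<lambda>(st,b). ins p b st) ` ({st::bool list. length st = L} \<times> UNIV)"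
    proof
      fix ys :: "bool list" assume "ys \<in> {st. length st = Suc L}"
      then have l: "length ys = Suc L" by simp
      then have "ys = ins p (ys!p) (take p ys @ drop (Suc p) ys)" by (intro ins_surj) (use assms in simp)
      moreover have "length (take p ys @ drop (Suc p) ys) = L" using l assms by simp
      ultimately show "ys \<in> (\<lambda>(st,b). ins p b st) ` ({st::bool list. length st = L} \<times> UNIV)"
        by (intro image_eqI[where x="(take p ys @ drop (Suc p) ys, ys!p)"]) auto
    qed
  qed auto
  have inj: "inj_on (\<lambda>(st,b). ins p b st) ({st::bool list. length st = L} \<times> UNIV)"
  proof (rule inj_onI)
    fix x y assume xy: "x \<in> {st::bool list. length st = L} \<times> UNIV" "y \<in> {st::bool list. length st = L} \<times> UNIV"
      "(\<lambda>(st,b). ins p b st) x = (\<lambda>(st,b). ins p b st) y"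
    obtain a b c d where ab: "x = (a,b)" "y = (c,d)" by (cases x, cases y) blast
    have "b = d \<and> a = c" using ins_inj[of p a c b d] xy ab assms by auto
    then show "x = y" using ab by simp
  qed
  have "(\<Sum>st\<in>{st. length st = Suc L}. g st) = (\<Sum>x\<in>{st::bool list. length st = L} \<times> UNIV. case x of (st,b) \<Rightarrow> g (ins p b st))"
    unfolding img by (subst sum.reindex[OF inj]) (simp add: comp_def prod.case_distrib)
  also have "\<dots> = (\<Sum>st\<in>{st::bool list. length st = L}. \<Sum>b\<in>UNIV. g (ins p b st))"
    by (simp add: sum.cartesian_product)
  also have "\<dots> = (\<Sum>st\<in>{st::bool list. length st = L}. g (ins p True st) + g (ins p False st))"
    by (simp add: UNIV_bool add.commute)
  finally show ?thesis .
qed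

lemma state_exp_list: "length st = length w \<Longrightarrow>
   state_exp w st = sum_list (map (\<lambda>(l,b). if b then - snd l else snd l) (zip w st))"
  unfolding state_exp_def by (simp add: sum_list_sum_nth atLeast0LessThan)

lemma zip_ins: "length xs = length ys \<Longrightarrow> p \<le> length xs \<Longrightarrow>
   zip (ins p a xs) (ins p b ys) = ins p (a,b) (zip xs ys)"
  by (simp add: ins_def take_zip drop_zip)

lemma sum_list_ins:
  fixes f :: "'a \<Rightarrow> 'b::comm_monoid_add"
  shows "p \<le> length xs \<Longrightarrow> sum_list (map f (ins p a xs)) = sum_list (map f xs) + f a"
proof -
  assume "p \<le> length xs"
  have "sum_list (map f xs) = sum_list (map f (take p xs @ drop p xs))" by simp
  then show ?thesis by (simp add: ins_def ac_simps del: append_take_drop_id)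
qed

lemma state_exp_ins: "length st = length w \<Longrightarrow> p \<le> length w \<Longrightarrow>
   state_exp (ins p l w) (ins p b st) = state_exp w st + (if b then - snd l else snd l)"
  by (simp add: state_exp_list zip_ins sum_list_ins)

lemma esum_list: "(\<Sum>t<length w. snd (w ! t)) = sum_list (map snd w)"
  by (simp add: sum_list_sum_nth atLeast0LessThan)

lemma esum_ins: "p \<le> length w \<Longrightarrow> (\<Sum>t<length (ins p l w). snd (ins p l w ! t)) = (\<Sum>t<length w. snd (w ! t)) + snd l"
  unfolding esum_list by (simp add: sum_list_ins)

lemma edges_fst_sub:
  assumes "map fst w = map fst w'"
  shows "diag_edges n w st \<subseteq> diag_edges n w' st"
proof -
  have len: "length w = length w'" using assms map_eq_imp_length_eq by blast
  have f: "t < length w \<Longrightarrow> fst (w!t) = fst (w'!t)" for t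
    using assms len by (metis nth_map)
  show ?thesis
  proof
    fix z assume "z \<in> diag_edges n w st"
    moreover obtain x y where z: "z = (x,y)" by (cases z) blast
    ultimately have "(x,y) \<in> diag_edges n w st" by simp
    from this[unfolded edge_iff]
    consider (a) q where "1\<le>q" "q\<le>n" "x = (length w,q)" "y = (0,q)"
        | (b) t q where "t<length w" "1\<le>q" "q\<le>n"
             "(q \<noteq> fst (w ! t) \<and> q \<noteq> Suc (fst (w ! t)) \<or> st ! t)" "x=(t,q)" "y = (Suc t,q)"
        | (c) t where "t < length w" "\<not> st!t" "x = (t,fst(w!t))" "y = (t,Suc(fst(w!t)))"
        | (d) t where "t < length w" "\<not> st!t" "x = (Suc t,fst(w!t))" "y = (Suc t,Suc(fst(w!t)))"
      by blast
    then have "(x,y) \<in> diag_edges n w' st"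
    proof cases
      case a then show ?thesis unfolding edge_iff len by blast
    next
      case b then have "fst (w!t) = fst (w'!t)" using f by simp
      then show ?thesis using b unfolding edge_iff len by auto
    next
      case c then have "fst (w!t) = fst (w'!t)" using f by simp
      then show ?thesis using c unfolding edge_iff len by auto
    next
      case d then have "fst (w!t) = fst (w'!t)" using f by simp
      then show ?thesis using d unfolding edge_iff len by auto
    qed
    then show "z \<in> diag_edges n w' st" using z by simp
  qed
qed

lemma loops_fst:
  assumes "map fst w = map fst w'"
  shows "loops n w st = loops n w' st"
proof -
  have len: "length w = length w'" using assms map_eq_imp_length_eq by blast
  have f: "t < length w \<Longrightarrow> fst (w!t) = fst (w'!t)" for t
    using assms len by (metis nth_map)
  have "diag_nodes n w = diag_nodes n w'" using len by (simp add: diag_nodes_def)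
  moreover have "diag_edges n w st = diag_edges n w' st"
    using edges_fst_sub[OF assms] edges_fst_sub[OF assms[symmetric]] by (rule subset_antisym)
  ultimately show ?thesis unfolding loops_def by simp
qed

lemma loops_pos: "1 \<le> n \<Longrightarrow> 1 \<le> loops n w st"
proof -
  assume n: "1 \<le> n"
  have fin: "finite (diag_nodes n w)"
  proof -
    have "diag_nodes n w \<subseteq> {0..length w} \<times> {0..n}" by (auto simp: diag_nodes_def)
    then show ?thesis by (rule finite_subset) auto
  qed
  have "(0,1) \<in> diag_nodes n w" using n by (simp add: diag_nodes_def)
  then have ne: "diag_nodes n w // (diag_edges n w st \<union> (diag_edges n w st)\<inverse>)\<^sup>* \<noteq> {}"
    by (auto simp: quotient_def)
  have "finite (diag_nodes n w // (diag_edges n w st \<union> (diag_edges n w st)\<inverse>)\<^sup>*)"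
    unfolding quotient_def using fin by auto
  then show ?thesis using ne unfolding loops_def
    by (simp add: Suc_le_eq card_gt_0_iff)
qed

definition Qf :: "nat \<Rightarrow> nat \<Rightarrow> nat \<Rightarrow> bword \<Rightarrow> int fls" where
  "Qf n p i w = (\<Sum>st\<in>{st. length st = length w}.
       Xp (state_exp w st) * dd ^ (loops n (ins p (i,0) w) (ins p False st) - 1))"

lemma skein:
  assumes p: "p \<le> length w" and v: "valid n w"
  shows "brk n (ins p l w) = Xp (- snd l) * brk n w + Xp (snd l) * Qf n p (fst l) w"
proof -
  have "brk n (ins p l w) = (\<Sum>st\<in>{st::bool list. length st = length w}.
      Xp (state_exp (ins p l w) (ins p True st)) * dd ^ (loops n (ins p l w) (ins p True st) - 1) +
      Xp (state_exp (ins p l w) (ins p False st)) * dd ^ (loops n (ins p l w) (ins p False st) - 1))"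
    unfolding brk_def length_ins by (rule split_states[OF p])
  also have "\<dots> = (\<Sum>st\<in>{st::bool list. length st = length w}.
      Xp (- snd l) * (Xp (state_exp w st) * dd ^ (loops n w st - 1)) +
      Xp (snd l) * (Xp (state_exp w st) * dd ^ (loops n (ins p (fst l, 0) w) (ins p False st) - 1)))"
  proof (rule sum.cong[OF refl])
    fix st :: "bool list" assume "st \<in> {st. length st = length w}"
    then have len: "length st = length w" by simp
    have l1: "loops n (ins p l w) (ins p True st) = loops n w st" by (rule loops_L1[OF p len v])
    have l2: "loops n (ins p l w) (ins p False st) = loops n (ins p (fst l, 0) w) (ins p False st)"
      by (rule loops_fst) (simp add: ins_def)
    show "Xp (state_exp (ins p l w) (ins p True st)) * dd ^ (loops n (ins p l w) (ins p True st) - 1) +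
      Xp (state_exp (ins p l w) (ins p False st)) * dd ^ (loops n (ins p l w) (ins p False st) - 1) =
      Xp (- snd l) * (Xp (state_exp w st) * dd ^ (loops n w st - 1)) +
      Xp (snd l) * (Xp (state_exp w st) * dd ^ (loops n (ins p (fst l, 0) w) (ins p False st) - 1))"
      unfolding l1 l2 state_exp_ins[OF len p] by (simp add: Xp_mult mult.assoc[symmetric] add.commute)
  qed
  also have "\<dots> = Xp (- snd l) * brk n w + Xp (snd l) * Qf n p (fst l) w"
    unfolding brk_def Qf_def by (simp add: sum.distrib sum_distrib_left)
  finally show ?thesis .
qed

lemma Qf_double:
  assumes p: "p \<le> length w" and v: "valid n w" and i: "1 \<le> i" "i < n"
  shows "Qf n p i (ins p (i,e) w) = (Xp (- e) + Xp e * dd) * Qf n p i w"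
proof -
  have vi: "valid n (ins p (i,0) w)" using v i p
    by (auto simp: valid_def ins_def dest: in_set_takeD in_set_dropD)
  have vl: "valid n (ins p (i,e) w)" using v i p
    by (auto simp: valid_def ins_def dest: in_set_takeD in_set_dropD)
  have n1: "1 \<le> n" using i by simp
  have "Qf n p i (ins p (i,e) w) = (\<Sum>st\<in>{st::bool list. length st = length w}.
      Xp (state_exp (ins p (i,e) w) (ins p True st)) * dd ^ (loops n (ins p (i,0) (ins p (i,e) w)) (ins p False (ins p True st)) - 1) +
      Xp (state_exp (ins p (i,e) w) (ins p False st)) * dd ^ (loops n (ins p (i,0) (ins p (i,e) w)) (ins p False (ins p False st)) - 1))"
    unfolding Qf_def length_ins by (rule split_states[OF p])
  also have "\<dots> = (\<Sum>st\<in>{st::bool list. length st = length w}.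
      Xp (- e) * (Xp (state_exp w st) * dd ^ (loops n (ins p (i,0) w) (ins p False st) - 1)) +
      (Xp e * dd) * (Xp (state_exp w st) * dd ^ (loops n (ins p (i,0) w) (ins p False st) - 1)))"
  proof (rule sum.cong[OF refl])
    fix st :: "bool list" assume "st \<in> {st. length st = length w}"
    then have len: "length st = length w" by simp
    have "loops n (ins p (i,0) (ins p (i,e) w)) (ins p False (ins p True st))
        = loops n (ins (Suc p) (i,e) (ins p (i,0) w)) (ins (Suc p) True (ins p False st))"
      using ins_ins p len by metis
    also have "\<dots> = loops n (ins p (i,0) w) (ins p False st)"
      by (rule loops_L1) (use p len vi in auto)
    finally have l1: "loops n (ins p (i,0) (ins p (i,e) w)) (ins p False (ins p True st))
        = loops n (ins p (i,0) w) (ins p False st)" .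
    have "loops n (ins p (i,0) (ins p (i,e) w)) (ins p False (ins p False st))
        = Suc (loops n (ins p (i,e) w) (ins p False st))"
      by (rule loops_L2) (use p len vl nth_ins_p[OF p] nth_ins_p[of p st] in auto)
    also have "loops n (ins p (i,e) w) (ins p False st) = loops n (ins p (i,0) w) (ins p False st)"
      by (rule loops_fst) (simp add: ins_def)
    finally have l2: "loops n (ins p (i,0) (ins p (i,e) w)) (ins p False (ins p False st))
        = Suc (loops n (ins p (i,0) w) (ins p False st))" .
    have pos: "1 \<le> loops n (ins p (i,0) w) (ins p False st)" by (rule loops_pos[OF n1])
    have dsuc: "dd ^ (Suc K - 1) = dd * dd ^ (K - 1)" if "1 \<le> K" for K
      using that by (cases K) auto
    show "Xp (state_exp (ins p (i,e) w) (ins p True st)) * dd ^ (loops n (ins p (i,0) (ins p (i,e) w)) (ins p False (ins p True st)) - 1) +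
      Xp (state_exp (ins p (i,e) w) (ins p False st)) * dd ^ (loops n (ins p (i,0) (ins p (i,e) w)) (ins p False (ins p False st)) - 1) =
      Xp (- e) * (Xp (state_exp w st) * dd ^ (loops n (ins p (i,0) w) (ins p False st) - 1)) +
      (Xp e * dd) * (Xp (state_exp w st) * dd ^ (loops n (ins p (i,0) w) (ins p False st) - 1))"
    proof -
      let ?s = "state_exp w st" and ?K = "dd ^ (loops n (ins p (i,0) w) (ins p False st) - 1)"
      have x1: "Xp (-e) * Xp ?s = Xp (?s + - e)" "Xp e * Xp ?s = Xp (?s + e)" by (simp_all add: Xp_mult add.commute)
      have "Xp (- e) * (Xp ?s * ?K) + (Xp e * dd) * (Xp ?s * ?K) = (Xp (-e) * Xp ?s) * ?K + (Xp e * Xp ?s) * (dd * ?K)"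
        by (simp only: ac_simps)
      also have "\<dots> = Xp (?s + - e) * ?K + Xp (?s + e) * (dd * ?K)" by (simp only: x1)
      finally show ?thesis unfolding l1 l2 state_exp_ins[OF len p] dsuc[OF pos] by simp
    qed
  qed
  also have "\<dots> = (Xp (- e) + Xp e * dd) * Qf n p i w"
    unfolding Qf_def by (simp add: sum.distrib sum_distrib_left algebra_simps)
  finally show ?thesis .
qed

lemma gp_pos: "0 \<le> x \<Longrightarrow> gen_power i (x+1) = (i,1) # gen_power i x"
proof -
  assume x: "0 \<le> x"
  have "nat \<bar>x+1\<bar> = Suc (nat \<bar>x\<bar>)" using x by simp
  moreover have "replicate (nat \<bar>x\<bar>) (i, sgn x) = replicate (nat \<bar>x\<bar>) (i, 1)"
    using x by (cases "x = 0") auto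
  ultimately show ?thesis using x unfolding gen_power_def by simp
qed

lemma gp_neg: "x < 0 \<Longrightarrow> gen_power i x = (i,-1) # gen_power i (x+1)"
proof -
  assume x: "x < 0"
  have "nat \<bar>x\<bar> = Suc (nat \<bar>x+1\<bar>)" using x by simp
  moreover have "replicate (nat \<bar>x+1\<bar>) (i, sgn (x+1)) = replicate (nat \<bar>x+1\<bar>) (i, -1)"
    using x by (cases "x = -1") auto
  ultimately show ?thesis using x unfolding gen_power_def by simp
qed

lemma ins_mid: "ins (length \<alpha>) l (\<alpha> @ r @ \<gamma>) = \<alpha> @ (l # r) @ \<gamma>"
  by (simp add: ins_def)

lemma set_gp: "z \<in> set (gen_power i a) \<Longrightarrow> z = (i, sgn a) \<and> a \<noteq> 0"
  by (auto simp: gen_power_def)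

lemma alg_pos:
  fixes u v b0 b1 b2 q0 q1 d :: "'a::idom"
  assumes "u * v = 1" "b1 = v * b0 + u * q0" "b2 = v * b1 + u * q1" "q1 = (v + u * d) * q0" "d = -(u^2) - (v^2)"
  shows "b2 = (v - u^3) * b1 + u^2 * b0"
  using assms by algebra

lemma alg_neg:
  fixes u v b0 b1 b2 q0 q1 d :: "'a::idom"
  assumes "u * v = 1" "b1 = u * b0 + v * q0" "b2 = u * b1 + v * q1" "q1 = (u + v * d) * q0" "d = -(u^2) - (v^2)"
  shows "b0 = (v - u^3) * b1 + u^2 * b2"
  using assms by algebra

lemma alg_mid:
  fixes u v b0 b1 bm q :: "'a::idom"
  assumes "u * v = 1" "b1 = v * b0 + u * q" "bm = u * b0 + v * q"
  shows "b1 = (v - u^3) * b0 + u^2 * bm"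
  using assms by algebra

lemma uv: "Xp 1 * Xp (-1) = 1" by (simp add: Xp_mult)
lemma Xpow: "Xp 1 ^ k = Xp (int k)" "Xp (-1) ^ k = Xp (- int k)" by (simp_all add: Xp_power)
lemma dd_uv: "dd = -(Xp 1 ^ 2) - (Xp (-1) ^ 2)" by (simp add: dd_def Xpow)

lemma brec:
  fixes \<alpha> \<gamma> :: bword and i :: nat
  defines "Wf \<equiv> \<lambda>x. \<alpha> @ gen_power i x @ \<gamma>"
  assumes va: "valid n \<alpha>" and vg: "valid n \<gamma>" and i: "1 \<le> i" "i < n"
  shows "brk n (Wf (x+2)) = (Xp (-1) - Xp 1 ^ 3) * brk n (Wf (x+1)) + Xp 1 ^ 2 * brk n (Wf x)"
proof -
  define p where "p = length \<alpha>"
  have v: "valid n (Wf y)" for y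
    using va vg i unfolding Wf_def valid_def by (auto dest: set_gp)
  have pl: "p \<le> length (Wf y)" for y unfolding p_def Wf_def by simp
  have ipos: "Wf (y+1) = ins p (i,1) (Wf y)" if "0 \<le> y" for y
    unfolding Wf_def p_def ins_mid using gp_pos[OF that] by simp
  have ineg: "Wf y = ins p (i,-1) (Wf (y+1))" if "y < 0" for y
    unfolding Wf_def p_def ins_mid using gp_neg[OF that] by simp
  consider "0 \<le> x" | "x \<le> -2" | "x = -1" by linarith
  then show ?thesis
  proof cases
    case 1
    have e1: "Wf (x+1) = ins p (i,1) (Wf x)" using ipos 1 by simp
    have e2: "Wf (x+2) = ins p (i,1) (Wf (x+1))" using ipos[of "x+1"] 1 by (simp add: add.assoc)
    show ?thesis
    proof (rule alg_pos[OF uv])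
      show "brk n (Wf (x + 1)) = Xp (- 1) * brk n (Wf x) + Xp 1 * Qf n p i (Wf x)"
        unfolding e1 using skein[OF pl v, of "(i,1)"] by simp
      show "brk n (Wf (x + 2)) = Xp (- 1) * brk n (Wf (x+1)) + Xp 1 * Qf n p i (Wf (x+1))"
        unfolding e2 using skein[OF pl v, of "(i,1)"] by simp
      show "Qf n p i (Wf (x+1)) = (Xp (- 1) + Xp 1 * dd) * Qf n p i (Wf x)"
        unfolding e1 by (rule Qf_double[OF pl v i])
      show "dd = -(Xp 1 ^ 2) - (Xp (-1) ^ 2)" by (rule dd_uv)
    qed
  next
    case 2
    have e1: "Wf x = ins p (i,-1) (Wf (x+1))" using ineg 2 by simp
    have e2: "Wf (x+1) = ins p (i,-1) (Wf (x+2))" using ineg[of "x+1"] 2 by (simp add: add.assoc)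
    have "brk n (Wf (x+2)) = (Xp (-1) - Xp 1 ^ 3) * brk n (Wf (x+1)) + Xp 1 ^ 2 * brk n (Wf x)"
    proof (rule alg_neg[OF uv])
      show "brk n (Wf (x + 1)) = Xp 1 * brk n (Wf (x+2)) + Xp (-1) * Qf n p i (Wf (x+2))"
        unfolding e2 using skein[OF pl v, of "(i,-1)"] by simp
      show "brk n (Wf x) = Xp 1 * brk n (Wf (x+1)) + Xp (-1) * Qf n p i (Wf (x+1))"
        unfolding e1 using skein[OF pl v, of "(i,-1)"] by simp
      show "Qf n p i (Wf (x+1)) = (Xp 1 + Xp (-1) * dd) * Qf n p i (Wf (x+2))"
        unfolding e2 using Qf_double[OF pl v i, of "-1"] by simp
      show "dd = -(Xp 1 ^ 2) - (Xp (-1) ^ 2)" by (rule dd_uv)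
    qed
    then show ?thesis .
  next
    case 3
    have e1: "Wf 1 = ins p (i,1) (Wf 0)" using ipos[of 0] by simp
    have e2: "Wf (-1) = ins p (i,-1) (Wf 0)" using ineg[of "-1"] by simp
    have "brk n (Wf 1) = (Xp (-1) - Xp 1 ^ 3) * brk n (Wf 0) + Xp 1 ^ 2 * brk n (Wf (-1))"
    proof (rule alg_mid[OF uv])
      show "brk n (Wf 1) = Xp (-1) * brk n (Wf 0) + Xp 1 * Qf n p i (Wf 0)"
        unfolding e1 using skein[OF pl v, of "(i,1)"] by simp
      show "brk n (Wf (-1)) = Xp 1 * brk n (Wf 0) + Xp (-1) * Qf n p i (Wf 0)"
        unfolding e2 using skein[OF pl v, of "(i,-1)"] by simp
    qed
    then show ?thesis using 3 by simp
  qed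
qed

lemma S_eq: "{st::bool list. length st = L} = {xs. set xs \<subseteq> UNIV \<and> length xs = L}" by simp
lemma S_fin: "finite {st::bool list. length st = L}"
  unfolding S_eq by (rule finite_lists_length_eq) simp
lemma S_card: "card {st::bool list. length st = L} = 2 ^ L"
  unfolding S_eq by (subst card_lists_length_eq) (simp_all add: card_UNIV_bool)

definition expset :: "nat \<Rightarrow> bword \<Rightarrow> int set" where
  "expset n w = (\<Union>st\<in>{st. length st = length w}.
      (\<lambda>j. state_exp w st + 4 * int j - 2 * int (loops n w st - 1)) ` {..loops n w st - 1})"

lemma expset_fin: "finite (expset n w)"
  unfolding expset_def using S_fin by auto

lemma bracket_supp: "bracket_coeff n w m \<noteq> 0 \<Longrightarrow> m \<in> expset n w"
proof -
  assume h: "bracket_coeff n w m \<noteq> 0"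
  then have "(\<Sum>st\<in>{st. length st = length w}. (\<Sum>j\<le>loops n w st - 1. if state_exp w st + 4 * int j - 2 * int (loops n w st - 1) = m
        then (-1) ^ (loops n w st - 1) * int ((loops n w st - 1) choose j) else 0)) \<noteq> 0"
    unfolding bracket_coeff_def Let_def .
  from sum.not_neutral_contains_not_neutral[OF this] obtain st where st: "length st = length w"
    "(\<Sum>j\<le>loops n w st - 1. if state_exp w st + 4 * int j - 2 * int (loops n w st - 1) = m
        then (-1) ^ (loops n w st - 1) * int ((loops n w st - 1) choose j) else 0) \<noteq> 0"
    by blast
  from sum.not_neutral_contains_not_neutral[OF st(2)] obtain j where
    "j \<le> loops n w st - 1" "(if state_exp w st + 4 * int j - 2 * int (loops n w st - 1) = m
        then (-1) ^ (loops n w st - 1) * int ((loops n w st - 1) choose j) else 0) \<noteq> 0"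
    by blast
  then have "j \<le> loops n w st - 1" "state_exp w st + 4 * int j - 2 * int (loops n w st - 1) = m"
    by (auto split: if_splits)
  then show ?thesis unfolding expset_def using st(1) by blast
qed

lemma bracket_sum: "(\<Sum>m\<in>expset n w. bracket_coeff n w m) =
    (\<Sum>st\<in>{st. length st = length w}. (-2) ^ (loops n w st - 1))"
proof -
  have "(\<Sum>m\<in>expset n w. bracket_coeff n w m) =
     (\<Sum>st\<in>{st. length st = length w}. \<Sum>j\<le>loops n w st - 1. \<Sum>m\<in>expset n w.
        if state_exp w st + 4 * int j - 2 * int (loops n w st - 1) = m
        then (-1) ^ (loops n w st - 1) * int ((loops n w st - 1) choose j) else 0)"
    unfolding bracket_coeff_def Let_def
    by (subst sum.swap) (simp add: sum.swap[of _ "expset n w"])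
  also have "\<dots> = (\<Sum>st\<in>{st. length st = length w}. \<Sum>j\<le>loops n w st - 1.
        (-1) ^ (loops n w st - 1) * int ((loops n w st - 1) choose j))"
  proof (intro sum.cong refl)
    fix st j assume "st \<in> {st. length st = length w}" "j \<in> {..loops n w st - 1}"
    then have "state_exp w st + 4 * int j - 2 * int (loops n w st - 1) \<in> expset n w"
      unfolding expset_def by blast
    then show "(\<Sum>m\<in>expset n w.
        if state_exp w st + 4 * int j - 2 * int (loops n w st - 1) = m
        then (-1) ^ (loops n w st - 1) * int ((loops n w st - 1) choose j) else 0) =
        (-1) ^ (loops n w st - 1) * int ((loops n w st - 1) choose j)"
      using expset_fin by simp
  qed
  also have "\<dots> = (\<Sum>st\<in>{st. length st = length w}. (-2) ^ (loops n w st - 1))"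
  proof (intro sum.cong refl)
    fix st
    have "(\<Sum>j\<le>loops n w st - 1. (-1) ^ (loops n w st - 1) * int ((loops n w st - 1) choose j))
        = (-1) ^ (loops n w st - 1) * int (\<Sum>j\<le>loops n w st - 1. (loops n w st - 1) choose j)"
      by (simp add: sum_distrib_left)
    also have "\<dots> = (-1) ^ (loops n w st - 1) * 2 ^ (loops n w st - 1)"
      by (simp add: choose_row_sum)
    also have "\<dots> = (-2::int) ^ (loops n w st - 1)" by (simp add: power_mult_distrib[symmetric])
    finally show "(\<Sum>j\<le>loops n w st - 1. (-1) ^ (loops n w st - 1) * int ((loops n w st - 1) choose j))
        = (-2::int) ^ (loops n w st - 1)" .
  qed
  finally show ?thesis .
qed

lemma pow2_mod3: "(2::int) ^ L mod 3 \<noteq> 0"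
proof (induction L)
  case 0 then show ?case by simp
next
  case (Suc L)
  have "(2::int) ^ Suc L mod 3 = (2 * (2 ^ L mod 3)) mod 3" by (simp add: mod_mult_right_eq)
  moreover have "(2::int) ^ L mod 3 = 1 \<or> (2::int) ^ L mod 3 = 2"
  proof -
    have "0 \<le> (2::int)^L mod 3" "(2::int)^L mod 3 < 3" by simp_all
    then show ?thesis using Suc.IH by linarith
  qed
  ultimately show ?case by auto
qed

lemma bracket_nonzero: "\<exists>m. bracket_coeff n w m \<noteq> 0"
proof (rule ccontr)
  assume "\<not> ?thesis"
  then have "(\<Sum>m\<in>expset n w. bracket_coeff n w m) = 0" by simp
  then have z: "(\<Sum>st\<in>{st. length st = length w}. (-2::int) ^ (loops n w st - 1)) mod 3 = 0"
    using bracket_sum by simp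
  have "(\<Sum>st\<in>{st. length st = length w}. (-2::int) ^ (loops n w st - 1)) mod 3
      = (\<Sum>st\<in>{st. length st = length w}. (-2::int) ^ (loops n w st - 1) mod 3) mod 3"
    by (simp add: mod_sum_eq)
  also have "\<dots> = (\<Sum>st\<in>{st::bool list. length st = length w}. 1::int) mod 3"
  proof -
    have "(-2::int) ^ k mod 3 = 1" for k
    proof -
      have "(-2::int) ^ k mod 3 = ((-2) mod 3) ^ k mod 3" by (rule power_mod[symmetric])
      also have "(-2::int) mod 3 = 1" by simp
      finally show ?thesis by simp
    qed
    then show ?thesis by simp
  qed
  also have "\<dots> = 2 ^ length w mod 3" using S_card[of "length w"] by simp
  finally show False using z pow2_mod3 by simp
qed

lemma odd_sum: "(\<And>t. t < L \<Longrightarrow> odd (f t :: int)) \<Longrightarrow> even (sum f {..<L} + int L)"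
proof (induction L)
  case 0 then show ?case by simp
next
  case (Suc L)
  then have "even (sum f {..<L} + int L)" by simp
  moreover have "odd (f L)" using Suc by simp
  ultimately show ?case by simp
qed

definition sgnok :: "bword \<Rightarrow> bool" where "sgnok w \<longleftrightarrow> (\<forall>z\<in>set w. snd z = 1 \<or> snd z = -1)"

lemma se_parity: "sgnok w \<Longrightarrow> even (state_exp w st + int (length w))"
  unfolding state_exp_def
  by (rule odd_sum) (auto simp: sgnok_def dest!: nth_mem)

lemma E_parity: "sgnok w \<Longrightarrow> even ((\<Sum>t<length w. snd (w ! t)) + int (length w))"
  by (rule odd_sum) (auto simp: sgnok_def dest!: nth_mem)

lemma expset_parity: "sgnok w \<Longrightarrow> m \<in> expset n w \<Longrightarrow> even (m + int (length w))"
  unfolding expset_def using se_parity by auto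

definition Esum :: "bword \<Rightarrow> int" where "Esum w = (\<Sum>t<length w. snd (w ! t))"

lemma jones_alt: "jones n w k = (-1) ^ nat \<bar>Esum w\<bar> * bracket_coeff n w (2 * k - 3 * Esum w)"
  unfolding jones_def fpoly_coeff_def Esum_def Let_def by simp

lemma jones_fin: "finite {k. jones n w k \<noteq> 0}"
proof -
  have "{k. jones n w k \<noteq> 0} \<subseteq> (\<lambda>m. (m + 3 * Esum w) div 2) ` expset n w"
  proof
    fix k assume "k \<in> {k. jones n w k \<noteq> 0}"
    then have "2 * k - 3 * Esum w \<in> expset n w" using bracket_supp by (auto simp: jones_alt)
    then show "k \<in> (\<lambda>m. (m + 3 * Esum w) div 2) ` expset n w"
      by (intro image_eqI[where x="2 * k - 3 * Esum w"]) auto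
  qed
  then show ?thesis by (rule finite_surj[OF expset_fin])
qed

lemma jones_nonzero: "sgnok w \<Longrightarrow> \<exists>k. jones n w k \<noteq> 0"
proof -
  assume s: "sgnok w"
  obtain m where m: "bracket_coeff n w m \<noteq> 0" using bracket_nonzero by blast
  have e1: "even (m + int (length w))" using expset_parity[OF s bracket_supp[OF m]] .
  have e2: "even (Esum w + int (length w))" using E_parity[OF s] by (simp add: Esum_def)
  have "even (m + 3 * Esum w)" using e1 e2 by presburger
  then have "2 * ((m + 3 * Esum w) div 2) - 3 * Esum w = m" by simp
  then have "jones n w ((m + 3 * Esum w) div 2) \<noteq> 0" using m by (simp add: jones_alt)
  then show ?thesis by blast
qed

lemma ldeg_prop:
  assumes "finite {k. c k \<noteq> 0}" "\<exists>k. c k \<noteq> 0"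
  shows "c (ldeg c) \<noteq> 0" "\<And>k. k > ldeg c \<Longrightarrow> c k = 0"
proof -
  have ne: "{k. c k \<noteq> 0} \<noteq> {}" using assms(2) by auto
  show "c (ldeg c) \<noteq> 0" unfolding ldeg_def using Max_in[OF assms(1) ne] by simp
  show "c k = 0" if "k > ldeg c" for k
  proof (rule ccontr)
    assume "c k \<noteq> 0"
    then have "k \<le> ldeg c" unfolding ldeg_def using Max_ge[OF assms(1)] by simp
    then show False using that by simp
  qed
qed

lemma ldeg_eqI:
  assumes "finite {k. c k \<noteq> 0}" "c d \<noteq> 0" "\<And>k. k > d \<Longrightarrow> c k = 0"
  shows "ldeg c = d"
  unfolding ldeg_def
proof (rule Max_eqI[OF assms(1)])
  show "y \<le> d" if "y \<in> {k. c k \<noteq> 0}" for y using that assms(3) by force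
  show "d \<in> {k. c k \<noteq> 0}" using assms(2) by simp
qed

lemma rec_step1:
  fixes f g h :: "int \<Rightarrow> int"
  assumes ff: "finite {k. f k \<noteq> 0}" "\<exists>k. f k \<noteq> 0"
    and gf: "finite {k. g k \<noteq> 0}" "\<exists>k. g k \<noteq> 0"
    and hf: "finite {k. h k \<noteq> 0}"
    and r: "\<And>k. h k = - g (k-1) + g (k-3) + f (k-4)"
    and le: "ldeg g \<le> ldeg f"
  shows "ldeg h = ldeg f + 4 \<and> lcoeff h = lcoeff f"
proof -
  note F = ldeg_prop[OF ff] and G = ldeg_prop[OF gf]
  have h1: "h (ldeg f + 4) = f (ldeg f)"
    using r[of "ldeg f + 4"] G(2)[of "ldeg f + 3"] G(2)[of "ldeg f + 1"] le by (simp add: ac_simps)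
  have h2: "h k = 0" if "k > ldeg f + 4" for k
    using r[of k] G(2)[of "k-1"] G(2)[of "k-3"] F(2)[of "k-4"] le that by simp
  have "ldeg h = ldeg f + 4" by (rule ldeg_eqI[OF hf]) (use h1 F(1) h2 in auto)
  then show ?thesis unfolding lcoeff_def using h1 by simp
qed

lemma rec_step2:
  fixes f g h :: "int \<Rightarrow> int"
  assumes ff: "finite {k. f k \<noteq> 0}" "\<exists>k. f k \<noteq> 0"
    and gf: "finite {k. g k \<noteq> 0}" "\<exists>k. g k \<noteq> 0"
    and hf: "finite {k. h k \<noteq> 0}"
    and r: "\<And>k. h k = - g (k-1) + g (k-3) + f (k-4)"
    and le: "ldeg f + 2 \<le> ldeg g"
  shows "ldeg h = ldeg g + 3 \<and> lcoeff h = lcoeff g"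
proof -
  note F = ldeg_prop[OF ff] and G = ldeg_prop[OF gf]
  have h1: "h (ldeg g + 3) = g (ldeg g)"
    using r[of "ldeg g + 3"] G(2)[of "ldeg g + 2"] F(2)[of "ldeg g - 1"] le by (simp add: ac_simps)
  have h2: "h k = 0" if "k > ldeg g + 3" for k
    using r[of k] G(2)[of "k-1"] G(2)[of "k-3"] F(2)[of "k-4"] le that by simp
  have "ldeg h = ldeg g + 3" by (rule ldeg_eqI[OF hf]) (use h1 G(1) h2 in auto)
  then show ?thesis unfolding lcoeff_def using h1 by simp
qed

lemma deg_main:
  fixes V :: "int \<Rightarrow> int \<Rightarrow> int" and e :: int
  assumes fin: "\<And>x. finite {k. V x k \<noteq> 0}" and nz: "\<And>x. \<exists>k. V x k \<noteq> 0"
    and r: "\<And>x k. V (x+2) k = - V (x+1) (k-1) + V (x+1) (k-3) + V x (k-4)"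
    and hyp: "ldeg (V (e + 1)) \<le> ldeg (V e)"
  shows "(\<forall>m::int. m \<ge> 1 \<longrightarrow> ldeg (V (e + m + 1)) > 1 + ldeg (V (e + m)))
       \<and> (\<forall>m::int. m \<ge> 2 \<longrightarrow> ldeg (V (e + m)) = ldeg (V e) + 3 * m - 2
                                 \<and> lcoeff (V (e + m)) = lcoeff (V e))"
proof -
  have claim: "ldeg (V (e + int k + 2)) = ldeg (V e) + 3 * (int k + 2) - 2 \<and>
      lcoeff (V (e + int k + 2)) = lcoeff (V e) \<and>
      ldeg (V (e + int k + 1)) + 2 \<le> ldeg (V (e + int k + 2))" for k
  proof (induction k)
    case 0
    have "ldeg (V (e+2)) = ldeg (V e) + 4 \<and> lcoeff (V (e+2)) = lcoeff (V e)"
      by (rule rec_step1[OF fin nz fin nz fin r hyp])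
    then show ?case using hyp by simp
  next
    case (Suc k)
    have r': "V (e + int k + 1 + 2) q = - V (e + int k + 1 + 1) (q-1) + V (e + int k + 1 + 1) (q-3)
        + V (e + int k + 1) (q-4)" for q
      using r[of "e + int k + 1" q] by simp
    have e1: "e + int k + 1 + 1 = e + int k + 2" "e + int k + 1 + 2 = e + int (Suc k) + 2"
      "e + int (Suc k) + 1 = e + int k + 2" by simp_all
    have ih3: "ldeg (V (e + int k + 1)) + 2 \<le> ldeg (V (e + int k + 2))" using Suc.IH by (rule conjunct2[THEN conjunct2])
    have st: "ldeg (V (e + int k + 1 + 2)) = ldeg (V (e + int k + 1 + 1)) + 3 \<and>
        lcoeff (V (e + int k + 1 + 2)) = lcoeff (V (e + int k + 1 + 1))"
      by (rule rec_step2[OF fin nz fin nz fin r']) (subst e1(1), rule ih3)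
    then show ?case using Suc.IH unfolding e1 by (simp add: ac_simps)
  qed
  show ?thesis
  proof (intro conjI allI impI)
    fix m :: int assume m: "1 \<le> m"
    show "1 + ldeg (V (e + m)) < ldeg (V (e + m + 1))"
    proof (cases "m = 1")
      case True
      then show ?thesis using claim[of 0] hyp by (simp add: add.assoc)
    next
      case False
      define k where "k = nat (m - 2)"
      have k: "m = int k + 2" using m False unfolding k_def by simp
      have eq: "e + m + 1 = e + int (Suc k) + 2" "e + m = e + int (Suc k) + 1" using k by simp_all
      have c3: "ldeg (V (e + int (Suc k) + 1)) + 2 \<le> ldeg (V (e + int (Suc k) + 2))"
        using claim[of "Suc k"] by (rule conjunct2[THEN conjunct2])
      show ?thesis by (subst eq(1), subst eq(2)) (use c3 in linarith)
    qed
  next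
    fix m :: int assume m: "2 \<le> m"
    define k where "k = nat (m - 2)"
    have k: "m = int k + 2" using m unfolding k_def by simp
    have eq: "e + m = e + int k + 2" using k by simp
    have c1: "ldeg (V (e + int k + 2)) = ldeg (V e) + 3 * (int k + 2) - 2"
      and c2: "lcoeff (V (e + int k + 2)) = lcoeff (V e)" using claim[of k] by blast+
    show "ldeg (V (e + m)) = ldeg (V e) + 3 * m - 2" by (subst eq, subst c1) (simp add: k)
    show "lcoeff (V (e + m)) = lcoeff (V e)" by (subst eq) (rule c2)
  qed
qed

lemma sign_step: "(-1::int) ^ nat \<bar>z + 1\<bar> = - ((-1) ^ nat \<bar>z\<bar>)"
proof -
  have s: "(-1::int) ^ nat \<bar>w\<bar> = (if even w then 1 else -1)" for w :: int
  proof -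
    have "even (nat \<bar>w\<bar>) \<longleftrightarrow> even w" by (simp add: even_nat_iff)
    then show ?thesis by (simp add: minus_one_power_iff)
  qed
  show ?thesis unfolding s by simp
qed

lemma mw_elems: "z \<in> set (monomial_word gs es) \<Longrightarrow> fst z \<in> set gs \<and> (snd z = 1 \<or> snd z = -1)"
proof -
  assume "z \<in> set (monomial_word gs es)"
  then obtain i b where ib: "(i,b) \<in> set (zip gs es)" "z \<in> set (gen_power i b)"
    unfolding monomial_word_def by auto
  then have "z = (i, sgn b)" "b \<noteq> 0" using set_gp by blast+
  moreover have "i \<in> set gs" using ib(1) by (rule set_zip_leftD)
  ultimately show ?thesis by (auto simp: sgn_if)
qed

lemma mw_decomp:
  assumes j: "j < length gens"
  shows "\<exists>\<alpha> \<gamma>. \<forall>x. monomial_word gens (map (\<lambda>h. if h = j then x else a h) [0..<length gens])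
            = \<alpha> @ gen_power (gens!j) x @ \<gamma>"
proof -
  define es0 where "es0 = map (\<lambda>h. if h = j then 0 else a h) [0..<length gens]"
  define Z where "Z = zip gens es0"
  have lZ: "j < length Z" using j by (simp add: Z_def es0_def)
  have es: "map (\<lambda>h. if h = j then x else a h) [0..<length gens] = es0[j := x]" for x
    by (rule nth_equalityI) (auto simp: es0_def nth_list_update)
  have z: "zip gens (es0[j := x]) = Z[j := (gens!j, x)]" for x
  proof -
    have "zip gens (es0[j := x]) = zip (gens[j := gens!j]) (es0[j := x])" by simp
    also have "\<dots> = Z[j := (gens!j, x)]" unfolding Z_def by (rule zip_update)
    finally show ?thesis .
  qed
  show ?thesis
  proof (intro exI allI)
    fix x
    show "monomial_word gens (map (\<lambda>h. if h = j then x else a h) [0..<length gens])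
      = concat (map (\<lambda>(i, a). gen_power i a) (take j Z)) @ gen_power (gens!j) x @
        concat (map (\<lambda>(i, a). gen_power i a) (drop (Suc j) Z))"
      unfolding monomial_word_def es z upd_conv_take_nth_drop[OF lZ] by simp
  qed
qed

theorem proposition3p3:
  fixes n :: nat and gens :: "nat list" and j :: nat and a :: "nat \<Rightarrow> int"
    and V :: "int \<Rightarrow> int \<Rightarrow> int" and e :: int
  assumes gens: "\<forall>i\<in>set gens. 1 \<le> i \<and> i < n"
    and j: "j < length gens"
    and V_def: "\<And>x. V x = jones n (monomial_word gens
                   (map (\<lambda>h. if h = j then x else a h) [0..<length gens]))"
    and hyp: "ldeg (V (e + 1)) \<le> ldeg (V e)"
  shows "(\<forall>m::int. m \<ge> 1 \<longrightarrow> ldeg (V (e + m + 1)) > 1 + ldeg (V (e + m)))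
       \<and> (\<forall>m::int. m \<ge> 2 \<longrightarrow> ldeg (V (e + m)) = ldeg (V e) + 3 * m - 2
                                 \<and> lcoeff (V (e + m)) = lcoeff (V e))"
proof -
  obtain \<alpha> \<gamma> where dec: "\<And>x. monomial_word gens (map (\<lambda>h. if h = j then x else a h) [0..<length gens])
            = \<alpha> @ gen_power (gens!j) x @ \<gamma>"
    using mw_decomp[OF j] by blast
  define i where "i = gens!j"
  define Wf where "Wf = (\<lambda>x. \<alpha> @ gen_power i x @ \<gamma>)"
  have VW: "V x = jones n (Wf x)" for x using V_def[of x] dec[of x] by (simp add: Wf_def i_def)
  have i: "1 \<le> i" "i < n" using gens j nth_mem[OF j] by (auto simp: i_def)
  have elems: "fst z \<in> set gens \<and> (snd z = 1 \<or> snd z = -1)" if "z \<in> set (Wf x)" for z x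
  proof -
    have "z \<in> set (monomial_word gens (map (\<lambda>h. if h = j then x else a h) [0..<length gens]))"
      using that unfolding dec[of x] Wf_def i_def .
    then show ?thesis by (rule mw_elems)
  qed
  have vz: "1 \<le> fst z \<and> fst z < n" if "z \<in> set (Wf x)" for z x
    using elems[OF that] gens by auto
  have va: "valid n \<alpha>" unfolding valid_def using vz[of _ 0] by (auto simp: Wf_def)
  have vg: "valid n \<gamma>" unfolding valid_def using vz[of _ 0] by (auto simp: Wf_def)
  have sg: "sgnok (Wf x)" for x unfolding sgnok_def using elems by blast
  have bcrec: "bracket_coeff n (Wf (x+2)) m = bracket_coeff n (Wf (x+1)) (m+1)
      - bracket_coeff n (Wf (x+1)) (m-3) + bracket_coeff n (Wf x) (m-2)" for x m
  proof -
    have b: "brk n (Wf (x+2)) = (Xp (-1) - Xp 1 ^ 3) * brk n (Wf (x+1)) + Xp 1 ^ 2 * brk n (Wf x)"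
      using brec[OF va vg i, of x] unfolding Wf_def .
    have "brk n (Wf (x+2)) $$ m = brk n (Wf (x+1)) $$ (m+1) - brk n (Wf (x+1)) $$ (m-3) + brk n (Wf x) $$ (m-2)"
      unfolding b Xpow by (simp add: left_diff_distrib)
    then show ?thesis by (simp add: brk_nth)
  qed
  define p where "p = length \<alpha>"
  have Es: "Esum (Wf (x+1)) = Esum (Wf x) + 1" for x
  proof (cases "0 \<le> x")
    case True
    then have "Wf (x+1) = ins p (i,1) (Wf x)" unfolding Wf_def p_def ins_mid using gp_pos[OF True] by simp
    then show ?thesis unfolding Esum_def using esum_ins[of p "Wf x" "(i,1)"] by (simp add: Wf_def p_def)
  next
    case False
    then have "Wf x = ins p (i,-1) (Wf (x+1))" unfolding Wf_def p_def ins_mid using gp_neg[of x i] by simp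
    then show ?thesis unfolding Esum_def using esum_ins[of p "Wf (x+1)" "(i,-1)"] by (simp add: Wf_def p_def)
  qed
  have Vrec: "V (x+2) k = - V (x+1) (k-1) + V (x+1) (k-3) + V x (k-4)" for x k
  proof -
    define E where "E = Esum (Wf x)"
    have E1: "Esum (Wf (x+1)) = E + 1" using Es E_def by simp
    have E2: "Esum (Wf (x+2)) = E + 2" using Es[of "x+1"] E1 by (simp add: add.assoc)
    have s1: "(-1::int) ^ nat \<bar>E+1\<bar> = - ((-1) ^ nat \<bar>E\<bar>)" by (rule sign_step)
    have s2: "(-1::int) ^ nat \<bar>E+2\<bar> = (-1) ^ nat \<bar>E\<bar>"
      using sign_step[of "E+1"] sign_step[of E] by (simp add: add.assoc)
    have a1: "2 * k - 3 * (E + 2) + 1 = 2 * (k - 1) - 3 * (E + 1)" by simp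
    have a2: "2 * k - 3 * (E + 2) - 3 = 2 * (k - 3) - 3 * (E + 1)" by simp
    have a3: "2 * k - 3 * (E + 2) - 2 = 2 * (k - 4) - 3 * E" by simp
    show ?thesis unfolding VW jones_alt E1 E2 E_def[symmetric] s1 s2 bcrec a1 a2 a3
      by (simp add: algebra_simps)
  qed
  show ?thesis
  proof (rule deg_main[OF _ _ _ hyp])
    show "finite {k. V x k \<noteq> 0}" for x unfolding VW by (rule jones_fin)
    show "\<exists>k. V x k \<noteq> 0" for x unfolding VW by (rule jones_nonzero[OF sg])
    show "V (x+2) k = - V (x+1) (k-1) + V (x+1) (k-3) + V x (k-4)" for x k by (rule Vrec)
  qed
qed

end
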